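(* Consider the stochastic processes $\{x^k\}_k$, $\{z^k\}_k$ generated by the normal map-based stochastic proximal gradient method described in the context, and suppose that conditions (A.2), (A.3) and (A.4) hold. Let $\{n_k\}_k\subseteq\mathbb{N}$ be an arbitrary strictly increasing sequence of indices and define \[ r_k:=\max_{n_k<j\le n_{k+1}}\Big\|\sum_{i=n_k}^{j-1}\alpha_i e^i\Big\|. \] Then $\sum_{k=0}^\infty \beta_{n_k}^2 r_k^2<\infty$ almost surely, where $\{\beta_k\}_k$ is the sequence from (A.4).
   Context: Let $\varphi:\mathbb{R}^d\to(-\infty,\infty]$ be convex, lower semicontinuous and proper, let $f:\mathbb{R}^d\to\mathbb{R}$ be continuously differentiable on an open set containing $\mathrm{dom}\,\varphi=\{x:\varphi(x)<\infty\}$, and set $\psi=f+\varphi$. For $\lambda>0$ let $\mathrm{prox}_{\lambda\varphi}(x)=\operatorname{argmin}_y\{\varphi(y)+\frac{1}{2\lambda}\|x-y\|^2\}$ and let $\mathrm{env}_{\lambda\varphi}(x)=\min_y\{\varphi(y)+\frac1{2\lambda}\|x-y\|^2\}$ be the Moreau envelope, with $\nabla\mathrm{env}_{\lambda\varphi}(x)=(x-\mathrm{prox}_{\lambda\varphi}(x))/\lambda$. Method: Let $(\Omega,\mathcal F,\{\mathcal F_k\}_k,\mathbb P)$ be a filtered probability space, $\lambda>0$, step sizes $\{\alpha_k\}_k\subset(0,\infty)$, a deterministic $z^0\in\mathbb{R}^d$ and $x^0=\mathrm{prox}_{\lambda\varphi}(z^0)$. For $k=0,1,2,\dots$ let $g^k:\Omega\to\mathbb{R}^d$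 be an $\mathcal F_{k+1}$-measurable random vector (a stochastic estimate of $\nabla f(x^k)$), and set $z^{k+1}=z^k-\alpha_k(g^k+\nabla\mathrm{env}_{\lambda\varphi}(z^k))$, $x^{k+1}=\mathrm{prox}_{\lambda\varphi}(z^{k+1})$. Thus $x^k,z^k$ are $\mathcal F_k$-measurable. Define the errors $e^k:=g^k-\nabla f(x^k)$. Conditions: (A.2) $\mathbb E[g^k\mid\mathcal F_k]=\nabla f(x^k)$ a.s. and there is $\{\sigma_k\}_k\subseteq\mathbb R_+$ with $\mathbb E[\|e^k\|^2]\le\sigma_k^2$ for all $k$. (A.3) $\sum_k\alpha_k=\infty$ and $\alpha_k\to0$. (A.4) There is a sequence $\{\beta_k\}_k\subseteq(0,\infty)$ which is non-decreasing for all $k$ sufficiently large such that $\sum_{k=0}^\infty\alpha_k^2\beta_k^2\sigma_k^2<\infty$. *)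

theory Defs
  imports "HOL-Analysis.Analysis" "HOL-Probability.Probability"
begin

definition edom :: "('d \<Rightarrow> ereal) \<Rightarrow> 'd set" where
  "edom \<phi> = {x. \<phi> x < \<infinity>}"

definition proper_fun :: "('d \<Rightarrow> ereal) \<Rightarrow> bool" where
  "proper_fun \<phi> \<longleftrightarrow> (\<forall>x. \<phi> x \<noteq> -\<infinity>) \<and> edom \<phi> \<noteq> {}"

definition econvex :: "('d::real_vector \<Rightarrow> ereal) \<Rightarrow> bool" where
  "econvex \<phi> \<longleftrightarrow> (\<forall>x y t. 0 \<le> t \<and> t \<le> 1 \<longrightarrow>
      \<phi> ((1 - t) *\<^sub>R x + t *\<^sub>R y) \<le> ereal (1 - t) * \<phi> x + ereal t * \<phi> y)"

definition elsc :: "('d::topological_space \<Rightarrow> ereal) \<Rightarrow> bool" where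
  "elsc \<phi> \<longleftrightarrow> (\<forall>x. \<phi> x \<le> Liminf (at x) \<phi>)"

text \<open>Proximal operator (the unique minimiser, under the standing assumptions).\<close>
definition prox :: "real \<Rightarrow> ('d::real_normed_vector \<Rightarrow> ereal) \<Rightarrow> 'd \<Rightarrow> 'd" where
  "prox lam \<phi> x = (SOME y. \<forall>w. \<phi> y + ereal (norm (x - y)^2 / (2 * lam))
                              \<le> \<phi> w + ereal (norm (x - w)^2 / (2 * lam)))"

definition grad_env :: "real \<Rightarrow> ('d::real_normed_vector \<Rightarrow> ereal) \<Rightarrow> 'd \<Rightarrow> 'd" where
  "grad_env lam \<phi> x = (1 / lam) *\<^sub>R (x - prox lam \<phi> x)"

end

theory Submission
  imports Defs
begin

lemma int_bound:
  fixes f g :: "'w \<Rightarrow> real"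
  assumes "integrable M f" "g \<in> borel_measurable M" "\<And>x. x \<in> space M \<Longrightarrow> \<bar>g x\<bar> \<le> f x"
  shows "integrable M g"
  by (rule Bochner_Integration.integrable_bound[OF assms(1) assms(2)])
     (auto intro!: AE_I2 simp: assms(3) intro: order_trans[OF assms(3)])

lemma abs_mult_le_sq: "\<bar>(a::real) * b\<bar> \<le> (a\<^sup>2 + b\<^sup>2) / 2"
proof -
  have "0 \<le> (\<bar>a\<bar> - \<bar>b\<bar>)\<^sup>2" by simp
  then show ?thesis by (simp add: abs_mult power2_eq_square algebra_simps)
qed

lemma prod_int:
  fixes f g :: "'w \<Rightarrow> real"
  assumes "integrable M (\<lambda>x. (f x)\<^sup>2)" "integrable M (\<lambda>x. (g x)\<^sup>2)"
    "f \<in> borel_measurable M" "g \<in> borel_measurable M"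
  shows "integrable M (\<lambda>x. f x * g x)"
  by (rule int_bound[where f="\<lambda>x. ((f x)\<^sup>2 + (g x)\<^sup>2) / 2"])
     (use assms abs_mult_le_sq in auto)

lemma meas_mono:
  assumes "subalgebra M A" "subalgebra M B" "sets A \<subseteq> sets B" "f \<in> borel_measurable A"
  shows "f \<in> borel_measurable B"
  using assms unfolding measurable_def subalgebra_def by auto

lemma doob_core:
  fixes d :: "nat \<Rightarrow> 'w \<Rightarrow> 'd::euclidean_space" and M :: "'w measure" and F :: "nat \<Rightarrow> 'w measure"
  assumes sub: "\<And>i. subalgebra M (F i)"
    and mono: "\<And>i j. i \<le> j \<Longrightarrow> sets (F i) \<subseteq> sets (F j)"
    and dm: "\<And>i. d i \<in> borel_measurable (F (Suc i))"
    and dL2: "\<And>i. integrable M (\<lambda>\<omega>. (norm (d i \<omega>))\<^sup>2)"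
    and orth: "\<And>i Y. Y \<in> borel_measurable (F i) \<Longrightarrow>
        integrable M (\<lambda>\<omega>. norm (d i \<omega>) * norm (Y \<omega>)) \<Longrightarrow> (\<integral>\<omega>. d i \<omega> \<bullet> Y \<omega> \<partial>M) = 0"
  shows "integrable M (\<lambda>\<omega>. (Max ((\<lambda>j. norm (\<Sum>i<j. d i \<omega>)) ` {..N}))\<^sup>2) \<and>
    (\<integral>\<omega>. (Max ((\<lambda>j. norm (\<Sum>i<j. d i \<omega>)) ` {..N}))\<^sup>2 \<partial>M) \<le> 4 * (\<Sum>i<N. \<integral>\<omega>. (norm (d i \<omega>))\<^sup>2 \<partial>M)"
proof -
  define S where "S j \<omega> = (\<Sum>i<j. d i \<omega>)" for j \<omega>
  define Mx where "Mx j \<omega> = Max ((\<lambda>l. norm (S l \<omega>)) ` {..j})" for j \<omega>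
  have FM: "f \<in> borel_measurable M" if "f \<in> borel_measurable (F i)" for f :: "'w \<Rightarrow> 'd" and i
    using measurable_from_subalg[OF sub that] .
  have FMr: "f \<in> borel_measurable M" if "f \<in> borel_measurable (F i)" for f :: "'w \<Rightarrow> real" and i
    using measurable_from_subalg[OF sub that] .
  have FF: "f \<in> borel_measurable (F j)" if "f \<in> borel_measurable (F i)" "i \<le> j" for f :: "'w \<Rightarrow> 'd" and i j
    using meas_mono[OF sub sub mono[OF that(2)] that(1)] .
  have FFr: "f \<in> borel_measurable (F j)" if "f \<in> borel_measurable (F i)" "i \<le> j" for f :: "'w \<Rightarrow> real" and i j
    using meas_mono[OF sub sub mono[OF that(2)] that(1)] .
  have dM[measurable]: "d i \<in> borel_measurable M" for i using FM[OF dm] .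
  have SF: "S j \<in> borel_measurable (F j)" for j
    unfolding S_def
    by (rule borel_measurable_sum) (rule FF[OF dm], simp)
  have SM[measurable]: "S j \<in> borel_measurable M" for j using FM[OF SF] .
  have S0: "S 0 \<omega> = 0" for \<omega> by (simp add: S_def)
  have SSuc: "S (Suc j) \<omega> = S j \<omega> + d j \<omega>" for j \<omega> by (simp add: S_def)
  have Mx0: "Mx 0 \<omega> = 0" for \<omega> by (simp add: Mx_def S0)
  have MxSuc: "Mx (Suc j) \<omega> = max (Mx j \<omega>) (norm (S (Suc j) \<omega>))" for j \<omega>
    unfolding Mx_def atMost_Suc image_insert
    by (subst Max_insert) (auto simp: max.commute)
  have Mxnn: "0 \<le> Mx j \<omega>" for j \<omega>
    by (induction j) (auto simp: Mx0 MxSuc le_max_iff_disj)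
  have MxF: "Mx j \<in> borel_measurable (F j)" for j
  proof (induction j)
    case 0 then show ?case by (simp add: Mx0)
  next
    case (Suc j)
    have "Mx j \<in> borel_measurable (F (Suc j))" using FFr[OF Suc] by simp
    moreover have "(\<lambda>\<omega>. norm (S (Suc j) \<omega>)) \<in> borel_measurable (F (Suc j))" using SF by measurable
    ultimately show ?case unfolding MxSuc by measurable
  qed
  have MxM[measurable]: "Mx j \<in> borel_measurable M" for j using FMr[OF MxF] .
  have SL2: "integrable M (\<lambda>\<omega>. (norm (S j \<omega>))\<^sup>2) \<and> (\<integral>\<omega>. (norm (S j \<omega>))\<^sup>2 \<partial>M) = (\<Sum>i<j. \<integral>\<omega>. (norm (d i \<omega>))\<^sup>2 \<partial>M)" for j
  proof (induction j)
    case 0 then show ?case by (simp add: S0)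
  next
    case (Suc j)
    have i1: "integrable M (\<lambda>\<omega>. norm (d j \<omega>) * norm (S j \<omega>))"
      by (rule prod_int) (use Suc dL2 in auto)
    have i2: "integrable M (\<lambda>\<omega>. d j \<omega> \<bullet> S j \<omega>)"
      by (rule int_bound[OF i1]) (auto simp: Cauchy_Schwarz_ineq2)
    have o: "(\<integral>\<omega>. d j \<omega> \<bullet> S j \<omega> \<partial>M) = 0"
      by (rule orth[OF SF i1])
    have eq: "(norm (S (Suc j) \<omega>))\<^sup>2 = (norm (S j \<omega>))\<^sup>2 + 2 * (d j \<omega> \<bullet> S j \<omega>) + (norm (d j \<omega>))\<^sup>2" for \<omega>
      unfolding SSuc power2_norm_eq_inner by (simp add: inner_add inner_commute algebra_simps)
    have i3: "integrable M (\<lambda>\<omega>. (norm (S j \<omega>))\<^sup>2 + 2 * (d j \<omega> \<bullet> S j \<omega>) + (norm (d j \<omega>))\<^sup>2)"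
      using Suc i2 dL2 by auto
    have "(\<integral>\<omega>. (norm (S (Suc j) \<omega>))\<^sup>2 \<partial>M) = (\<integral>\<omega>. (norm (S j \<omega>))\<^sup>2 + 2 * (d j \<omega> \<bullet> S j \<omega>) + (norm (d j \<omega>))\<^sup>2 \<partial>M)"
      unfolding eq ..
    also have "\<dots> = (\<integral>\<omega>. (norm (S j \<omega>))\<^sup>2 \<partial>M) + 2 * (\<integral>\<omega>. d j \<omega> \<bullet> S j \<omega> \<partial>M) + (\<integral>\<omega>. (norm (d j \<omega>))\<^sup>2 \<partial>M)"
      using Suc i2 dL2 by simp
    finally show ?case using Suc i3 o unfolding eq by simp
  qed
  have MxL2: "integrable M (\<lambda>\<omega>. (Mx j \<omega>)\<^sup>2)" for j
  proof -
    have b: "(Mx j \<omega>)\<^sup>2 \<le> (\<Sum>l\<le>j. (norm (S l \<omega>))\<^sup>2)" for \<omega>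
    proof (induction j)
      case 0 then show ?case by (simp add: Mx0)
    next
      case (Suc j)
      have "(Mx (Suc j) \<omega>)\<^sup>2 \<le> (Mx j \<omega>)\<^sup>2 + (norm (S (Suc j) \<omega>))\<^sup>2"
        unfolding MxSuc using Mxnn[of j \<omega>] by (auto simp: max_def)
      then show ?case using Suc by simp
    qed
    show ?thesis
      by (rule int_bound[where f="\<lambda>\<omega>. \<Sum>l\<le>j. (norm (S l \<omega>))\<^sup>2"]) (use SL2 b in auto)
  qed
  have S2: "integrable M (\<lambda>\<omega>. (norm (S j \<omega>))\<^sup>2)" for j using SL2 by blast
  have key: "(\<integral>\<omega>. norm (S (Suc j) \<omega>) * (Mx (Suc j) \<omega> - Mx j \<omega>) \<partial>M)
      \<le> (\<integral>\<omega>. norm (S N \<omega>) * (Mx (Suc j) \<omega> - Mx j \<omega>) \<partial>M)" if jN: "Suc j \<le> N" for j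
  proof -
    define u where "u = Suc j"
    define Z where "Z \<omega> = Mx u \<omega> - Mx j \<omega>" for \<omega>
    define Y where "Y \<omega> = Z \<omega> *\<^sub>R sgn (S u \<omega>)" for \<omega>
    have ZF: "Z \<in> borel_measurable (F u)" unfolding Z_def u_def using MxF FFr[OF MxF[of j]] by measurable
    have ZM[measurable]: "Z \<in> borel_measurable M" using FMr[OF ZF] .
    have Znn: "0 \<le> Z \<omega>" for \<omega> unfolding Z_def u_def MxSuc by simp
    have Zle: "Z \<omega> \<le> Mx u \<omega>" for \<omega> unfolding Z_def using Mxnn[of j \<omega>] by simp
    have Z2: "integrable M (\<lambda>\<omega>. (Z \<omega>)\<^sup>2)"
      by (rule int_bound[OF MxL2[of u]]) (use Znn Zle Mxnn in \<open>auto intro!: power_mono\<close>)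
    have YF: "Y \<in> borel_measurable (F u)" unfolding Y_def using ZF SF[of u] by measurable
    have YM[measurable]: "Y \<in> borel_measurable M" using FM[OF YF] .
    have nY: "norm (Y \<omega>) \<le> Z \<omega>" for \<omega>
      unfolding Y_def using Znn[of \<omega>] by (auto simp: norm_sgn)
    have Y2: "integrable M (\<lambda>\<omega>. (norm (Y \<omega>))\<^sup>2)"
      by (rule int_bound[OF Z2]) (use nY in \<open>auto intro!: power_mono\<close>)
    have SY: "integrable M (\<lambda>\<omega>. S m \<omega> \<bullet> Y \<omega>)" for m
    proof -
      have "integrable M (\<lambda>\<omega>. norm (S m \<omega>) * norm (Y \<omega>))"
        by (rule prod_int) (use S2 Y2 in auto)
      then show ?thesis by (rule int_bound) (auto simp: Cauchy_Schwarz_ineq2)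
    qed
    have ind: "(\<integral>\<omega>. S m \<omega> \<bullet> Y \<omega> \<partial>M) = (\<integral>\<omega>. S u \<omega> \<bullet> Y \<omega> \<partial>M)" if "u \<le> m" for m
      using that
    proof (induction m rule: dec_induct)
      case base then show ?case by simp
    next
      case (step m)
      have i1: "integrable M (\<lambda>\<omega>. norm (d m \<omega>) * norm (Y \<omega>))"
        by (rule prod_int) (use dL2 Y2 in auto)
      have i2: "integrable M (\<lambda>\<omega>. d m \<omega> \<bullet> Y \<omega>)"
        by (rule int_bound[OF i1]) (auto simp: Cauchy_Schwarz_ineq2)
      have o: "(\<integral>\<omega>. d m \<omega> \<bullet> Y \<omega> \<partial>M) = 0"
        by (rule orth[OF FF[OF YF step(1)] i1])
      have "(\<integral>\<omega>. S (Suc m) \<omega> \<bullet> Y \<omega> \<partial>M) = (\<integral>\<omega>. S m \<omega> \<bullet> Y \<omega> + d m \<omega> \<bullet> Y \<omega> \<partial>M)"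
        unfolding SSuc by (simp add: inner_add_left)
      also have "\<dots> = (\<integral>\<omega>. S m \<omega> \<bullet> Y \<omega> \<partial>M) + (\<integral>\<omega>. d m \<omega> \<bullet> Y \<omega> \<partial>M)"
        using SY i2 by simp
      finally show ?case using o step by simp
    qed
    have eqS: "S u \<omega> \<bullet> Y \<omega> = norm (S u \<omega>) * Z \<omega>" for \<omega>
    proof (cases "S u \<omega> = 0")
      case True then show ?thesis by (simp add: Y_def)
    next
      case False then show ?thesis
        by (simp add: Y_def sgn_div_norm inner_scaleR_right dot_square_norm power2_eq_square)
    qed
    have leN: "S N \<omega> \<bullet> Y \<omega> \<le> norm (S N \<omega>) * Z \<omega>" for \<omega>
    proof -
      have "S N \<omega> \<bullet> Y \<omega> \<le> norm (S N \<omega>) * norm (Y \<omega>)" by (rule norm_cauchy_schwarz)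
      also have "\<dots> \<le> norm (S N \<omega>) * Z \<omega>" by (rule mult_left_mono[OF nY]) simp
      finally show ?thesis .
    qed
    have iN: "integrable M (\<lambda>\<omega>. norm (S N \<omega>) * Z \<omega>)"
      by (rule prod_int) (use S2 Z2 in auto)
    have "(\<integral>\<omega>. norm (S u \<omega>) * Z \<omega> \<partial>M) = (\<integral>\<omega>. S u \<omega> \<bullet> Y \<omega> \<partial>M)" by (simp add: eqS)
    also have "\<dots> = (\<integral>\<omega>. S N \<omega> \<bullet> Y \<omega> \<partial>M)" using ind[of N] jN by (simp add: u_def)
    also have "\<dots> \<le> (\<integral>\<omega>. norm (S N \<omega>) * Z \<omega> \<partial>M)"
      by (rule integral_mono[OF SY iN leN])
    finally show ?thesis by (simp add: Z_def u_def)
  qed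
  have SMx: "integrable M (\<lambda>\<omega>. norm (S N \<omega>) * Mx j \<omega>)" for j
    by (rule prod_int) (use S2 MxL2 in auto)
  have main: "(\<integral>\<omega>. (Mx j \<omega>)\<^sup>2 \<partial>M) \<le> 2 * (\<integral>\<omega>. norm (S N \<omega>) * Mx j \<omega> \<partial>M)" if "j \<le> N" for j
    using that
  proof (induction j)
    case 0 then show ?case by (simp add: Mx0)
  next
    case (Suc j)
    define Z where "Z \<omega> = Mx (Suc j) \<omega> - Mx j \<omega>" for \<omega>
    have pw: "(Mx (Suc j) \<omega>)\<^sup>2 \<le> (Mx j \<omega>)\<^sup>2 + 2 * (norm (S (Suc j) \<omega>) * Z \<omega>)" for \<omega>
    proof (cases "norm (S (Suc j) \<omega>) \<le> Mx j \<omega>")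
      case True then show ?thesis unfolding Z_def MxSuc by simp
    next
      case False
      then have "Mx (Suc j) \<omega> = norm (S (Suc j) \<omega>)" unfolding MxSuc by simp
      moreover have "0 \<le> (norm (S (Suc j) \<omega>) - Mx j \<omega>)\<^sup>2" by simp
      ultimately show ?thesis unfolding Z_def
        by (simp add: power2_eq_square algebra_simps)
    qed
    have iZ: "integrable M (\<lambda>\<omega>. norm (S (Suc j) \<omega>) * Z \<omega>)"
      unfolding Z_def right_diff_distrib
      by (intro Bochner_Integration.integrable_diff; rule prod_int) (use S2 MxL2 in auto)
    have iZN: "integrable M (\<lambda>\<omega>. norm (S N \<omega>) * Z \<omega>)"
      unfolding Z_def right_diff_distrib using SMx by auto
    have "(\<integral>\<omega>. (Mx (Suc j) \<omega>)\<^sup>2 \<partial>M) \<le> (\<integral>\<omega>. (Mx j \<omega>)\<^sup>2 + 2 * (norm (S (Suc j) \<omega>) * Z \<omega>) \<partial>M)"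
      by (rule integral_mono[OF MxL2]) (use MxL2 iZ pw in auto)
    also have "\<dots> = (\<integral>\<omega>. (Mx j \<omega>)\<^sup>2 \<partial>M) + 2 * (\<integral>\<omega>. norm (S (Suc j) \<omega>) * Z \<omega> \<partial>M)"
      using MxL2 iZ by simp
    also have "\<dots> \<le> 2 * (\<integral>\<omega>. norm (S N \<omega>) * Mx j \<omega> \<partial>M) + 2 * (\<integral>\<omega>. norm (S N \<omega>) * Z \<omega> \<partial>M)"
      using Suc key[of j] unfolding Z_def by simp
    also have "\<dots> = 2 * (\<integral>\<omega>. norm (S N \<omega>) * Mx (Suc j) \<omega> \<partial>M)"
      unfolding Z_def right_diff_distrib using SMx by simp
    finally show ?case .
  qed
  have pw: "2 * (norm (S N \<omega>) * Mx N \<omega>) \<le> (Mx N \<omega>)\<^sup>2 / 2 + 2 * (norm (S N \<omega>))\<^sup>2" for \<omega>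
  proof -
    have "0 \<le> (Mx N \<omega> - 2 * norm (S N \<omega>))\<^sup>2" by simp
    then show ?thesis by (simp add: power2_eq_square algebra_simps)
  qed
  have "(\<integral>\<omega>. (Mx N \<omega>)\<^sup>2 \<partial>M) \<le> 2 * (\<integral>\<omega>. norm (S N \<omega>) * Mx N \<omega> \<partial>M)" using main by simp
  also have "\<dots> = (\<integral>\<omega>. 2 * (norm (S N \<omega>) * Mx N \<omega>) \<partial>M)" by simp
  also have "\<dots> \<le> (\<integral>\<omega>. (Mx N \<omega>)\<^sup>2 / 2 + 2 * (norm (S N \<omega>))\<^sup>2 \<partial>M)"
    by (rule integral_mono) (use SMx MxL2 S2 pw in auto)
  also have "\<dots> = (\<integral>\<omega>. (Mx N \<omega>)\<^sup>2 \<partial>M) / 2 + 2 * (\<integral>\<omega>. (norm (S N \<omega>))\<^sup>2 \<partial>M)"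
    using MxL2 S2 by simp
  finally have "(\<integral>\<omega>. (Mx N \<omega>)\<^sup>2 \<partial>M) \<le> 4 * (\<integral>\<omega>. (norm (S N \<omega>))\<^sup>2 \<partial>M)" by simp
  then show ?thesis using MxL2[of N] SL2[of N] unfolding Mx_def S_def by simp
qed

lemma sum_shift: "(\<Sum>i\<in>{a..<a+l}. f i) = (\<Sum>i<l. f (a + i))" for f :: "nat \<Rightarrow> 'a::comm_monoid_add"
  by (subst sum.atLeastLessThan_shift_0) (simp add: atLeast0LessThan comp_def)

lemma doob_block:
  fixes d :: "nat \<Rightarrow> 'w \<Rightarrow> 'd::euclidean_space" and M :: "'w measure" and F :: "nat \<Rightarrow> 'w measure"
  assumes sub: "\<And>i. subalgebra M (F i)"
    and mono: "\<And>i j. i \<le> j \<Longrightarrow> sets (F i) \<subseteq> sets (F j)"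
    and dm: "\<And>i. d i \<in> borel_measurable (F (Suc i))"
    and dL2: "\<And>i. integrable M (\<lambda>\<omega>. (norm (d i \<omega>))\<^sup>2)"
    and orth: "\<And>i Y. Y \<in> borel_measurable (F i) \<Longrightarrow>
        integrable M (\<lambda>\<omega>. norm (d i \<omega>) * norm (Y \<omega>)) \<Longrightarrow> (\<integral>\<omega>. d i \<omega> \<bullet> Y \<omega> \<partial>M) = 0"
    and ab: "a < b"
  shows "integrable M (\<lambda>\<omega>. (Max ((\<lambda>j. norm (\<Sum>i\<in>{a..<j}. d i \<omega>)) ` {a<..b}))\<^sup>2) \<and>
    (\<integral>\<omega>. (Max ((\<lambda>j. norm (\<Sum>i\<in>{a..<j}. d i \<omega>)) ` {a<..b}))\<^sup>2 \<partial>M) \<le> 4 * (\<Sum>i\<in>{a..<b}. \<integral>\<omega>. (norm (d i \<omega>))\<^sup>2 \<partial>M)"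
proof -
  define N where "N = b - a"
  have bN: "b = a + N" using ab by (simp add: N_def)
  have C: "integrable M (\<lambda>\<omega>. (Max ((\<lambda>j. norm (\<Sum>i<j. d (a + i) \<omega>)) ` {..N}))\<^sup>2) \<and>
    (\<integral>\<omega>. (Max ((\<lambda>j. norm (\<Sum>i<j. d (a + i) \<omega>)) ` {..N}))\<^sup>2 \<partial>M) \<le> 4 * (\<Sum>i<N. \<integral>\<omega>. (norm (d (a + i) \<omega>))\<^sup>2 \<partial>M)"
    by (rule doob_core[where F="\<lambda>i. F (a + i)"]) (use sub mono dm dL2 orth in auto)
  define R where "R \<omega> = Max ((\<lambda>j. norm (\<Sum>i\<in>{a..<j}. d i \<omega>)) ` {a<..b})" for \<omega>
  define Q where "Q \<omega> = Max ((\<lambda>j. norm (\<Sum>i<j. d (a + i) \<omega>)) ` {..N})" for \<omega>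
  have dM[measurable]: "d i \<in> borel_measurable M" for i using measurable_from_subalg[OF sub dm] .
  have RM[measurable]: "R \<in> borel_measurable M" unfolding R_def by measurable
  have Rnn: "0 \<le> R \<omega>" for \<omega>
  proof -
    have "norm (\<Sum>i\<in>{a..<b}. d i \<omega>) \<le> R \<omega>" unfolding R_def by (rule Max_ge) (use ab in auto)
    then show ?thesis using norm_ge_zero order_trans by blast
  qed
  have RQ: "R \<omega> \<le> Q \<omega>" for \<omega>
    unfolding R_def
  proof (subst Max_le_iff, simp, use ab in simp, clarify)
    fix j assume j: "j \<in> {a<..b}"
    then obtain l where l: "j = a + l" "l \<le> N" using bN by (metis greaterThanAtMost_iff le_add_diff_inverse less_imp_le_nat add_le_cancel_left)
    have "norm (\<Sum>i\<in>{a..<j}. d i \<omega>) = norm (\<Sum>i<l. d (a + i) \<omega>)" unfolding l(1) sum_shift ..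
    also have "\<dots> \<le> Q \<omega>" unfolding Q_def by (rule Max_ge) (use l in auto)
    finally show "norm (\<Sum>i\<in>{a..<j}. d i \<omega>) \<le> Q \<omega>" .
  qed
  have R2Q: "(R \<omega>)\<^sup>2 \<le> (Q \<omega>)\<^sup>2" for \<omega> using Rnn RQ by (intro power_mono) auto
  have iQ: "integrable M (\<lambda>\<omega>. (Q \<omega>)\<^sup>2)" using C unfolding Q_def by blast
  have iR: "integrable M (\<lambda>\<omega>. (R \<omega>)\<^sup>2)"
    by (rule int_bound[OF iQ]) (use R2Q in auto)
  have "(\<integral>\<omega>. (R \<omega>)\<^sup>2 \<partial>M) \<le> (\<integral>\<omega>. (Q \<omega>)\<^sup>2 \<partial>M)"
    by (rule integral_mono[OF iR iQ R2Q])
  also have "\<dots> \<le> 4 * (\<Sum>i<N. \<integral>\<omega>. (norm (d (a + i) \<omega>))\<^sup>2 \<partial>M)" using C unfolding Q_def by blast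
  also have "\<dots> = 4 * (\<Sum>i\<in>{a..<b}. \<integral>\<omega>. (norm (d i \<omega>))\<^sup>2 \<partial>M)" unfolding bN sum_shift ..
  finally show ?thesis using iR unfolding R_def by blast
qed

theorem lemma2p6:
  fixes \<phi> :: "'d::euclidean_space \<Rightarrow> ereal"
    and f :: "'d \<Rightarrow> real" and gradf :: "'d \<Rightarrow> 'd"
    and M :: "'w measure" and F :: "nat \<Rightarrow> 'w measure"
    and lam :: real and \<alpha> \<sigma> \<beta> :: "nat \<Rightarrow> real" and z0 :: 'd
    and g x z :: "nat \<Rightarrow> 'w \<Rightarrow> 'd"
    and n :: "nat \<Rightarrow> nat"
  assumes phi: "econvex \<phi>" "elsc \<phi>" "proper_fun \<phi>"
    and f_C1: "\<exists>U. open U \<and> edom \<phi> \<subseteq> U \<and> continuous_on U gradf \<and>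
                 (\<forall>y\<in>U. (f has_derivative (\<lambda>h. gradf y \<bullet> h)) (at y))"
    and prob: "prob_space M"
    and filt: "filtration (space M) F" "\<And>k. subalgebra M (F k)"
    and lam: "lam > 0"
    and alpha_pos: "\<And>k. \<alpha> k > 0"
    and g_meas: "\<And>k. g k \<in> borel_measurable (F (Suc k))"
    and z_0: "\<And>\<omega>. z 0 \<omega> = z0"
    and x_def: "\<And>k \<omega>. x k \<omega> = prox lam \<phi> (z k \<omega>)"
    and z_Suc: "\<And>k \<omega>. z (Suc k) \<omega> = z k \<omega> - \<alpha> k *\<^sub>R (g k \<omega> + grad_env lam \<phi> (z k \<omega>))"
    and A2_int: "\<And>k. integrable M (g k)"
    and A2_condexp: "\<And>k b. b \<in> Basis \<Longrightarrow>
        AE \<omega> in M. real_cond_exp M (F k) (\<lambda>\<omega>. g k \<omega> \<bullet> b) \<omega> = gradf (x k \<omega>) \<bullet> b"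
    and A2_sigma: "\<And>k. \<sigma> k \<ge> 0"
    and A2_var: "\<And>k. (\<integral>\<^sup>+ \<omega>. ennreal ((norm (g k \<omega> - gradf (x k \<omega>)))\<^sup>2) \<partial>M) \<le> ennreal ((\<sigma> k)\<^sup>2)"
    and A3: "filterlim (\<lambda>m. \<Sum>k<m. \<alpha> k) at_top sequentially" "\<alpha> \<longlonglongrightarrow> 0"
    and A4: "\<And>k. \<beta> k > 0" "\<exists>K. \<forall>k\<ge>K. \<beta> k \<le> \<beta> (Suc k)"
        "summable (\<lambda>k. (\<alpha> k)\<^sup>2 * (\<beta> k)\<^sup>2 * (\<sigma> k)\<^sup>2)"
    and n_mono: "strict_mono n"
  shows "AE \<omega> in M. summable (\<lambda>k. (\<beta> (n k))\<^sup>2 *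
           (Max ((\<lambda>j. norm (\<Sum>i\<in>{n k..<j}. \<alpha> i *\<^sub>R (g i \<omega> - gradf (x i \<omega>))))
                  ` {n k<..n (Suc k)}))\<^sup>2)"
proof -
  interpret P: prob_space M by (rule prob)
  have mono: "\<And>i j. i \<le> j \<Longrightarrow> sets (F i) \<subseteq> sets (F j)"
    using filtration.sets_F_mono[OF filt(1)] by blast
  have sfs: "sigma_finite_subalgebra M (F k)" for k
    by (rule finite_measure_subalgebra_is_sigma_finite)
       (simp add: finite_measure_subalgebra_def finite_measure_subalgebra_axioms_def P.finite_measure_axioms filt(2))
  define rc where "rc k b = real_cond_exp M (F k) (\<lambda>\<omega>. g k \<omega> \<bullet> b)" for k b
  define h where "h k \<omega> = (\<Sum>b\<in>Basis. rc k b \<omega> *\<^sub>R b)" for k \<omega>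
  define e' where "e' k \<omega> = g k \<omega> - h k \<omega>" for k \<omega>
  have gM[measurable]: "g k \<in> borel_measurable M" for k using measurable_from_subalg[OF filt(2) g_meas] .
  have hF: "h k \<in> borel_measurable (F k)" for k unfolding h_def rc_def by measurable
  have hF': "h k \<in> borel_measurable (F (Suc k))" for k
    using meas_mono[OF filt(2) filt(2) mono[of k "Suc k"] hF[of k]] by simp
  have e'F: "e' k \<in> borel_measurable (F (Suc k))" for k
    unfolding e'_def using g_meas[of k] hF'[of k] by measurable
  have e'M[measurable]: "e' k \<in> borel_measurable M" for k using measurable_from_subalg[OF filt(2) e'F] .
  have AEeq: "AE \<omega> in M. \<forall>k. e' k \<omega> = g k \<omega> - gradf (x k \<omega>)"
  proof -
    have "AE \<omega> in M. \<forall>k. \<forall>b\<in>Basis. rc k b \<omega> = gradf (x k \<omega>) \<bullet> b"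
      unfolding rc_def AE_all_countable
      by (intro allI AE_finite_allI) (auto intro: A2_condexp)
    then show ?thesis
    proof (rule AE_mp, intro AE_I2 impI allI)
      fix \<omega> k assume a: "\<forall>k. \<forall>b\<in>Basis. rc k b \<omega> = gradf (x k \<omega>) \<bullet> b"
      have "h k \<omega> = (\<Sum>b\<in>Basis. (gradf (x k \<omega>) \<bullet> b) *\<^sub>R b)"
        unfolding h_def by (rule sum.cong) (use a in auto)
      then show "e' k \<omega> = g k \<omega> - gradf (x k \<omega>)" by (simp add: e'_def euclidean_representation)
    qed
  qed
  have L2: "integrable M (\<lambda>\<omega>. (norm (e' k \<omega>))\<^sup>2) \<and> (\<integral>\<omega>. (norm (e' k \<omega>))\<^sup>2 \<partial>M) \<le> (\<sigma> k)\<^sup>2" for k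
  proof -
    have "(\<integral>\<^sup>+\<omega>. ennreal ((norm (e' k \<omega>))\<^sup>2) \<partial>M) = (\<integral>\<^sup>+\<omega>. ennreal ((norm (g k \<omega> - gradf (x k \<omega>)))\<^sup>2) \<partial>M)"
      by (rule nn_integral_cong_AE) (rule AE_mp[OF AEeq], auto intro!: AE_I2)
    also have "\<dots> \<le> ennreal ((\<sigma> k)\<^sup>2)" by (rule A2_var)
    finally have nn: "(\<integral>\<^sup>+\<omega>. ennreal ((norm (e' k \<omega>))\<^sup>2) \<partial>M) \<le> ennreal ((\<sigma> k)\<^sup>2)" .
    have int: "integrable M (\<lambda>\<omega>. (norm (e' k \<omega>))\<^sup>2)"
      by (rule integrableI_nonneg) (use nn in \<open>auto intro: le_less_trans\<close>)
    have "ennreal (\<integral>\<omega>. (norm (e' k \<omega>))\<^sup>2 \<partial>M) \<le> ennreal ((\<sigma> k)\<^sup>2)"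
      using nn nn_integral_eq_integral[OF int] by simp
    then show ?thesis using int by (simp add: ennreal_le_iff)
  qed
  have orth_e: "(\<integral>\<omega>. e' k \<omega> \<bullet> Y \<omega> \<partial>M) = 0"
    if YF: "Y \<in> borel_measurable (F k)" and iY: "integrable M (\<lambda>\<omega>. norm (e' k \<omega>) * norm (Y \<omega>))" for k Y
  proof -
    interpret S: sigma_finite_subalgebra M "F k" by (rule sfs)
    have YM[measurable]: "Y \<in> borel_measurable M" using measurable_from_subalg[OF filt(2) YF] .
    have ip: "integrable M (\<lambda>\<omega>. (Y \<omega> \<bullet> b) * (e' k \<omega> \<bullet> b))" if b: "b \<in> Basis" for b
    proof (rule int_bound[OF iY])
      show "(\<lambda>\<omega>. (Y \<omega> \<bullet> b) * (e' k \<omega> \<bullet> b)) \<in> borel_measurable M" by measurable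
      fix \<omega>
      have "\<bar>Y \<omega> \<bullet> b\<bar> * \<bar>e' k \<omega> \<bullet> b\<bar> \<le> norm (Y \<omega>) * norm (e' k \<omega>)"
        by (intro mult_mono Basis_le_norm b) auto
      then show "\<bar>(Y \<omega> \<bullet> b) * (e' k \<omega> \<bullet> b)\<bar> \<le> norm (e' k \<omega>) * norm (Y \<omega>)"
        by (simp add: abs_mult mult.commute)
    qed
    have comp: "(\<integral>\<omega>. (Y \<omega> \<bullet> b) * (e' k \<omega> \<bullet> b) \<partial>M) = 0" if b: "b \<in> Basis" for b
    proof -
      have ig: "integrable M (\<lambda>\<omega>. g k \<omega> \<bullet> b)" using A2_int by auto
      have irc: "integrable M (rc k b)" unfolding rc_def by (rule S.real_cond_exp_int(1)[OF ig])
      have rcF: "rc k b \<in> borel_measurable (F k)" unfolding rc_def by measurable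
      have eb: "(\<lambda>\<omega>. e' k \<omega> \<bullet> b) = (\<lambda>\<omega>. g k \<omega> \<bullet> b - rc k b \<omega>)"
        using b by (auto simp: e'_def h_def inner_diff_left inner_sum_left inner_Basis if_distrib cong: if_cong)
      have ce: "AE \<omega> in M. real_cond_exp M (F k) (\<lambda>\<omega>. e' k \<omega> \<bullet> b) \<omega> = 0"
        using S.real_cond_exp_diff[OF ig irc] S.real_cond_exp_F_meas[OF irc rcF]
        unfolding eb by eventually_elim (simp add: rc_def)
      have "(\<integral>\<omega>. (Y \<omega> \<bullet> b) * (e' k \<omega> \<bullet> b) \<partial>M)
          = (\<integral>\<omega>. (Y \<omega> \<bullet> b) * real_cond_exp M (F k) (\<lambda>\<omega>. e' k \<omega> \<bullet> b) \<omega> \<partial>M)"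
        by (rule S.real_cond_exp_intg(2)[symmetric]) (use ip[OF b] YF in \<open>auto\<close>)
      also have "\<dots> = (\<integral>\<omega>. 0 \<partial>M)"
      proof (rule integral_cong_AE)
        show "AE \<omega> in M. (Y \<omega> \<bullet> b) * real_cond_exp M (F k) (\<lambda>\<omega>. e' k \<omega> \<bullet> b) \<omega> = 0"
          using ce by eventually_elim simp
      qed simp_all
      finally show ?thesis by simp
    qed
    have "(\<integral>\<omega>. e' k \<omega> \<bullet> Y \<omega> \<partial>M) = (\<integral>\<omega>. (\<Sum>b\<in>Basis. (Y \<omega> \<bullet> b) * (e' k \<omega> \<bullet> b)) \<partial>M)"
      by (subst euclidean_inner) (simp add: mult.commute)
    also have "\<dots> = (\<Sum>b\<in>Basis. \<integral>\<omega>. (Y \<omega> \<bullet> b) * (e' k \<omega> \<bullet> b) \<partial>M)"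
      by (rule Bochner_Integration.integral_sum[where f="\<lambda>b \<omega>. (Y \<omega> \<bullet> b) * (e' k \<omega> \<bullet> b)"]) (rule ip)
    also have "\<dots> = 0" using comp by simp
    finally show ?thesis .
  qed
  define d where "d i \<omega> = \<alpha> i *\<^sub>R e' i \<omega>" for i \<omega>
  have dF: "d i \<in> borel_measurable (F (Suc i))" for i unfolding d_def using e'F[of i] by measurable
  have dM[measurable]: "d i \<in> borel_measurable M" for i unfolding d_def by measurable
  have dL2: "integrable M (\<lambda>\<omega>. (norm (d i \<omega>))\<^sup>2)" for i
    using L2[of i] by (simp add: d_def power_mult_distrib)
  have dint: "(\<integral>\<omega>. (norm (d i \<omega>))\<^sup>2 \<partial>M) \<le> (\<alpha> i)\<^sup>2 * (\<sigma> k)\<^sup>2" if "k = i" for i k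
  proof -
    have "(\<integral>\<omega>. (norm (d i \<omega>))\<^sup>2 \<partial>M) = (\<alpha> i)\<^sup>2 * (\<integral>\<omega>. (norm (e' i \<omega>))\<^sup>2 \<partial>M)"
      by (simp add: d_def power_mult_distrib)
    also have "\<dots> \<le> (\<alpha> i)\<^sup>2 * (\<sigma> k)\<^sup>2" using L2[of i] that by (intro mult_left_mono) auto
    finally show ?thesis .
  qed
  have orth_d: "(\<integral>\<omega>. d i \<omega> \<bullet> Y \<omega> \<partial>M) = 0"
    if YF: "Y \<in> borel_measurable (F i)" and iY: "integrable M (\<lambda>\<omega>. norm (d i \<omega>) * norm (Y \<omega>))" for i Y
  proof -
    have "integrable M (\<lambda>\<omega>. \<alpha> i * (norm (e' i \<omega>) * norm (Y \<omega>)))"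
      using iY alpha_pos[of i] by (simp add: d_def mult.assoc)
    then have "integrable M (\<lambda>\<omega>. norm (e' i \<omega>) * norm (Y \<omega>))"
      using alpha_pos[of i] by simp
    then have "(\<integral>\<omega>. e' i \<omega> \<bullet> Y \<omega> \<partial>M) = 0" by (rule orth_e[OF YF])
    then show ?thesis by (simp add: d_def)
  qed
  obtain K where K: "\<And>k. k \<ge> K \<Longrightarrow> \<beta> k \<le> \<beta> (Suc k)" using A4(2) by blast
  have bmono: "\<beta> i \<le> \<beta> j" if "K \<le> i" "i \<le> j" for i j
    using that(2)
  proof (induction j rule: dec_induct)
    case base then show ?case by simp
  next
    case (step m) then show ?case using K[of m] that(1) by simp
  qed
  define c where "c i = (\<alpha> i)\<^sup>2 * (\<beta> i)\<^sup>2 * (\<sigma> i)\<^sup>2" for i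
  have cnn: "0 \<le> c i" for i by (simp add: c_def)
  have csum: "summable c" using A4(3) unfolding c_def[abs_def] .
  define B where "B k = (\<Sum>i\<in>{n k..<n (Suc k)}. c i)" for k
  have Bnn: "0 \<le> B k" for k unfolding B_def by (rule sum_nonneg) (use cnn in auto)
  define R where "R k \<omega> = Max ((\<lambda>j. norm (\<Sum>i\<in>{n k..<j}. d i \<omega>)) ` {n k<..n (Suc k)})" for k \<omega>
  define D where "D k \<omega> = (\<beta> (n k))\<^sup>2 * (R k \<omega>)\<^sup>2" for k \<omega>
  have DM[measurable]: "D k \<in> borel_measurable M" for k unfolding D_def R_def by measurable
  have Dnn: "0 \<le> D k \<omega>" for k \<omega> by (simp add: D_def)
  have blk: "(\<integral>\<^sup>+\<omega>. ennreal (D k \<omega>) \<partial>M) \<le> ennreal (4 * B k)" if kK: "K \<le> k" for k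
  proof -
    have nk: "n k < n (Suc k)" using n_mono by (simp add: strict_mono_def)
    have Kn: "K \<le> n k" using kK seq_suble[OF n_mono, of k] by simp
    have DB: "integrable M (\<lambda>\<omega>. (R k \<omega>)\<^sup>2) \<and> (\<integral>\<omega>. (R k \<omega>)\<^sup>2 \<partial>M) \<le> 4 * (\<Sum>i\<in>{n k..<n (Suc k)}. \<integral>\<omega>. (norm (d i \<omega>))\<^sup>2 \<partial>M)"
      unfolding R_def by (rule doob_block[where M=M and F=F and d=d, OF filt(2) mono dF dL2 orth_d nk])
    have iD: "integrable M (D k)" using DB by (simp add: D_def[abs_def])
    have "(\<integral>\<^sup>+\<omega>. ennreal (D k \<omega>) \<partial>M) = ennreal (\<integral>\<omega>. D k \<omega> \<partial>M)"
      by (rule nn_integral_eq_integral[OF iD]) (simp add: Dnn)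
    also have "(\<integral>\<omega>. D k \<omega> \<partial>M) = (\<beta> (n k))\<^sup>2 * (\<integral>\<omega>. (R k \<omega>)\<^sup>2 \<partial>M)" by (simp add: D_def)
    also have "\<dots> \<le> (\<beta> (n k))\<^sup>2 * (4 * (\<Sum>i\<in>{n k..<n (Suc k)}. \<integral>\<omega>. (norm (d i \<omega>))\<^sup>2 \<partial>M))"
      using DB by (intro mult_left_mono) auto
    also have "\<dots> = 4 * (\<Sum>i\<in>{n k..<n (Suc k)}. (\<beta> (n k))\<^sup>2 * (\<integral>\<omega>. (norm (d i \<omega>))\<^sup>2 \<partial>M))"
      by (simp only: sum_distrib_left[symmetric] mult.left_commute[of "(\<beta> (n k))\<^sup>2" 4])
    also have "\<dots> \<le> 4 * B k"
      unfolding B_def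
    proof (intro mult_left_mono sum_mono)
      fix i assume i: "i \<in> {n k..<n (Suc k)}"
      have b: "(\<beta> (n k))\<^sup>2 \<le> (\<beta> i)\<^sup>2"
        using bmono[OF Kn, of i] i A4(1)[of "n k"] by (intro power_mono) auto
      have "(\<beta> (n k))\<^sup>2 * (\<integral>\<omega>. (norm (d i \<omega>))\<^sup>2 \<partial>M) \<le> (\<beta> (n k))\<^sup>2 * ((\<alpha> i)\<^sup>2 * (\<sigma> i)\<^sup>2)"
        by (intro mult_left_mono dint) auto
      also have "\<dots> \<le> (\<beta> i)\<^sup>2 * ((\<alpha> i)\<^sup>2 * (\<sigma> i)\<^sup>2)"
        by (intro mult_right_mono b) auto
      finally show "(\<beta> (n k))\<^sup>2 * (\<integral>\<omega>. (norm (d i \<omega>))\<^sup>2 \<partial>M) \<le> c i" by (simp add: c_def ac_simps)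
    qed simp
    finally show ?thesis by (simp add: ennreal_leI)
  qed
  have Bpart: "(\<Sum>k<m. B k) = (\<Sum>i\<in>{n 0..<n m}. c i)" for m
  proof (induction m)
    case 0 then show ?case by simp
  next
    case (Suc m)
    have "n 0 \<le> n m" "n m \<le> n (Suc m)" using n_mono by (auto simp: strict_mono_less_eq)
    then show ?case using Suc by (simp add: B_def sum.atLeastLessThan_concat)
  qed
  have Bsum: "summable B"
  proof (rule summableI_nonneg_bounded[where x="suminf c"])
    fix m
    have "(\<Sum>i\<in>{n 0..<n m}. c i) \<le> (\<Sum>i<n m. c i)"
      by (rule sum_mono2) (use cnn in auto)
    also have "\<dots> \<le> suminf c" by (rule sum_le_suminf[OF csum]) (use cnn in auto)
    finally show "sum B {..<m} \<le> suminf c" using Bpart by simp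
  qed (rule Bnn)
  have BsumK: "summable (\<lambda>k. 4 * B (k + K))"
    using Bsum by (intro summable_mult) (simp add: summable_iff_shift)
  have "(\<integral>\<^sup>+\<omega>. (\<Sum>k. ennreal (D (k + K) \<omega>)) \<partial>M) = (\<Sum>k. \<integral>\<^sup>+\<omega>. ennreal (D (k + K) \<omega>) \<partial>M)"
    by (rule nn_integral_suminf) simp
  also have "\<dots> \<le> (\<Sum>k. ennreal (4 * B (k + K)))"
  proof (rule suminf_le)
    fix k show "(\<integral>\<^sup>+\<omega>. ennreal (D (k + K) \<omega>) \<partial>M) \<le> ennreal (4 * B (k + K))"
      using blk[of "k + K"] by simp
  qed (rule summableI)+
  also have "\<dots> = ennreal (\<Sum>k. 4 * B (k + K))"
    by (rule suminf_ennreal2[OF _ BsumK]) (simp add: Bnn)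
  finally have le: "(\<integral>\<^sup>+\<omega>. (\<Sum>k. ennreal (D (k + K) \<omega>)) \<partial>M) \<le> ennreal (\<Sum>k. 4 * B (k + K))" .
  have fin: "(\<integral>\<^sup>+\<omega>. (\<Sum>k. ennreal (D (k + K) \<omega>)) \<partial>M) \<noteq> \<infinity>"
    unfolding infinity_ennreal_def by (rule neq_top_trans[OF ennreal_neq_top le])
  have "AE \<omega> in M. (\<Sum>k. ennreal (D (k + K) \<omega>)) \<noteq> \<infinity>"
    by (rule nn_integral_PInf_AE[OF _ fin]) simp
  then show ?thesis
  proof (rule AE_mp[OF AE_conjI[OF _ AEeq]], intro AE_I2 impI, elim conjE)
    fix \<omega> assume fi: "(\<Sum>k. ennreal (D (k + K) \<omega>)) \<noteq> \<infinity>"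
      and eq: "\<forall>k. e' k \<omega> = g k \<omega> - gradf (x k \<omega>)"
    have "summable (\<lambda>k. D (k + K) \<omega>)"
      by (rule summable_suminf_not_top) (use Dnn fi in auto)
    then have "summable (\<lambda>k. D k \<omega>)" using summable_iff_shift[of "\<lambda>k. D k \<omega>" K] by simp
    moreover have "D k \<omega> = (\<beta> (n k))\<^sup>2 *
           (Max ((\<lambda>j. norm (\<Sum>i\<in>{n k..<j}. \<alpha> i *\<^sub>R (g i \<omega> - gradf (x i \<omega>))))
                  ` {n k<..n (Suc k)}))\<^sup>2" for k
      using eq by (simp add: D_def R_def d_def)
    ultimately show "summable (\<lambda>k. (\<beta> (n k))\<^sup>2 *
           (Max ((\<lambda>j. norm (\<Sum>i\<in>{n k..<j}. \<alpha> i *\<^sub>R (g i \<omega> - gradf (x i \<omega>))))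
                  ` {n k<..n (Suc k)}))\<^sup>2)" by simp
  qed
qed

end
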